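(* For $t\in\bar\tau_\delta=\{0,\delta,\dots,T\}$ let $v^t$ be the value function at time $t$ and $v_h^t$ its approximation given by the ideal max-plus finite element method. Then \[ \|v_h^T-v^T\|_\infty\leq\Big(1+\frac T\delta\Big)\sup_{t\in\bar\tau_\delta}\Big(\|P^{-\mathcal Z_h}(v^t)-v^t\|_\infty+\|P_{\mathcal W_h}(v^t)-v^t\|_\infty\Big). \]
   Context: Optimal control setting: $X\subseteq\mathbb{R}^n$, $U\subseteq\mathbb{R}^m$, $\ell:X\times U\to\mathbb R$, $f:X\times U\to\mathbb{R}^n$, $T>0$, $\phi:X\to\mathbb{R}\cup\{-\infty\}$. For $t\ge0$ and $g:X\to\overline{\mathbb R}$, $S^tg(x)=\sup\{\int_0^t\ell(\mathbf x(s),\mathbf u(s))ds+g(\mathbf x(t))\}$ over measurable $\mathbf u:[0,t]\to U$ and absolutely continuous $\mathbf x:[0,t]\to X$ with $\dot{\mathbf x}=f(\mathbf x,\mathbf u)$ a.e. and $\mathbf x(0)=x$; value function $v^t=S^t\phi$. Arithmetic in $\overline{\mathbb R}=\mathbb{R}\cup\{\pm\infty\}$ with $-\infty$ absorbing for $+$; $a\backslash b=\max\{\lambda\in\overline{\mathbb{R}}:a+\lambda\leq b\}$. $\langle u,v\rangle=\sup_{x\in X}(u(x)+v(x))$. Finite elements $w_1,\dots,w_p$ and test functions $z_1,\dots,z_q$, functions $X\to\mathbb{R}\cup\{-\infty\}$. $W_h\lambda=\sup_i(w_i+\lambda_i)$; $(W_h\backslash g)_i=\inf_{x\in X}(w_i(x)\backslash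 g(x))$; $P_{\mathcal W_h}g=W_h(W_h\backslash g)$; $P^{-\mathcal Z_h}g(x)=\min_j\big(z_j(x)\backslash\langle z_j,g\rangle\big)$. For a matrix $A$: $(A\lambda)_j=\max_k(A_{jk}+\lambda_k)$, $(A\backslash\mu)_i=\min_jA_{ji}\backslash\mu_j$. Ideal max-plus finite element method: $N\geq1$, $\delta=T/N$, $(M_h)_{ji}=\langle z_j,w_i\rangle$, $(K_h)_{ji}=\langle z_j,S^\delta w_i\rangle$, $\lambda^0=W_h\backslash\phi$, $\lambda^{t+\delta}=M_h\backslash(K_h\lambda^t)$, $v_h^t=W_h\lambda^t$. For $u,v:X\to\overline{\mathbb R}$, $\|u-v\|_\infty=\inf\{\lambda\geq0: v-\lambda\leq u\leq v+\lambda\}$ (equal to $\sup_x|u(x)-v(x)|$ when $u-v$ is finite-valued). *)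

theory Defs
  imports "HOL-Analysis.Analysis"
begin

definition mp_plus :: "ereal \<Rightarrow> ereal \<Rightarrow> ereal" (infixl "\<oplus>" 65) where
  "a \<oplus> b = (if a = -\<infinity> \<or> b = -\<infinity> then -\<infinity> else a + b)"

text \<open>Residuation a\b = max{lambda : a + lambda <= b} (the maximum exists, so it is the Sup).\<close>
definition mp_res :: "ereal \<Rightarrow> ereal \<Rightarrow> ereal" where
  "mp_res a b = Sup {l. a \<oplus> l \<le> b}"

definition pairing :: "'x set \<Rightarrow> ('x \<Rightarrow> ereal) \<Rightarrow> ('x \<Rightarrow> ereal) \<Rightarrow> ereal" where
  "pairing X u v = (SUP x\<in>X. u x \<oplus> v x)"

definition sup_dist :: "'x set \<Rightarrow> ('x \<Rightarrow> ereal) \<Rightarrow> ('x \<Rightarrow> ereal) \<Rightarrow> ereal" where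
  "sup_dist X u v = Inf {l. 0 \<le> l \<and> (\<forall>x\<in>X. v x \<oplus> (- l) \<le> u x \<and> u x \<le> v x \<oplus> l)}"

definition abs_cont_on :: "real \<Rightarrow> (real \<Rightarrow> 'a::real_normed_vector) \<Rightarrow> bool" where
  "abs_cont_on t x \<longleftrightarrow>
     (\<forall>e>0. \<exists>d>0. \<forall>(n::nat) (a::nat \<Rightarrow> real) b.
        (\<forall>k<n. 0 \<le> a k \<and> a k \<le> b k \<and> b k \<le> t) \<and>
        (\<forall>k<n. \<forall>j<n. k \<noteq> j \<longrightarrow> {a k<..<b k} \<inter> {a j<..<b j} = {}) \<and>
        (\<Sum>k<n. b k - a k) < d
        \<longrightarrow> (\<Sum>k<n. norm (x (b k) - x (a k))) < e)"

text \<open>Admissible control/trajectory pairs on [0,t] starting at x0. We additionally require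
  the running cost to be Lebesgue integrable on [0,t], so that the integral is meaningful.\<close>
definition admissible ::
  "('x::euclidean_space) set \<Rightarrow> ('u::euclidean_space) set \<Rightarrow> ('x \<Rightarrow> 'u \<Rightarrow> real)
   \<Rightarrow> ('x \<Rightarrow> 'u \<Rightarrow> 'x) \<Rightarrow> real \<Rightarrow> 'x \<Rightarrow> (real \<Rightarrow> 'u) \<Rightarrow> (real \<Rightarrow> 'x) \<Rightarrow> bool" where
  "admissible X U lc f t x0 u xx \<longleftrightarrow>
     u \<in> borel_measurable (lebesgue_on {0..t}) \<and> (\<forall>s\<in>{0..t}. u s \<in> U) \<and>
     abs_cont_on t xx \<and> (\<forall>s\<in>{0..t}. xx s \<in> X) \<and> xx 0 = x0 \<and>
     (AE s in lebesgue_on {0..t}. (xx has_vector_derivative f (xx s) (u s)) (at s within {0..t})) \<and>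
     set_integrable lborel {0..t} (\<lambda>s. lc (xx s) (u s))"

definition S_op ::
  "('x::euclidean_space) set \<Rightarrow> ('u::euclidean_space) set \<Rightarrow> ('x \<Rightarrow> 'u \<Rightarrow> real)
   \<Rightarrow> ('x \<Rightarrow> 'u \<Rightarrow> 'x) \<Rightarrow> real \<Rightarrow> ('x \<Rightarrow> ereal) \<Rightarrow> 'x \<Rightarrow> ereal" where
  "S_op X U lc f t g x0 =
     (SUP (u, xx) \<in> {(u, xx). admissible X U lc f t x0 u xx}.
        ereal (set_lebesgue_integral lborel {0..t} (\<lambda>s. lc (xx s) (u s))) \<oplus> g (xx t))"

definition W_op :: "nat \<Rightarrow> (nat \<Rightarrow> 'x \<Rightarrow> ereal) \<Rightarrow> (nat \<Rightarrow> ereal) \<Rightarrow> 'x \<Rightarrow> ereal" where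
  "W_op p w lam x = (SUP i\<in>{..<p}. w i x \<oplus> lam i)"

definition W_res :: "'x set \<Rightarrow> (nat \<Rightarrow> 'x \<Rightarrow> ereal) \<Rightarrow> ('x \<Rightarrow> ereal) \<Rightarrow> nat \<Rightarrow> ereal" where
  "W_res X w g i = (INF x\<in>X. mp_res (w i x) (g x))"

definition proj_W :: "'x set \<Rightarrow> nat \<Rightarrow> (nat \<Rightarrow> 'x \<Rightarrow> ereal) \<Rightarrow> ('x \<Rightarrow> ereal) \<Rightarrow> 'x \<Rightarrow> ereal" where
  "proj_W X p w g = W_op p w (W_res X w g)"

definition proj_Z :: "'x set \<Rightarrow> nat \<Rightarrow> (nat \<Rightarrow> 'x \<Rightarrow> ereal) \<Rightarrow> ('x \<Rightarrow> ereal) \<Rightarrow> 'x \<Rightarrow> ereal" where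
  "proj_Z X q z g x = (INF j\<in>{..<q}. mp_res (z j x) (pairing X (z j) g))"

definition mat_apply :: "nat \<Rightarrow> (nat \<Rightarrow> nat \<Rightarrow> ereal) \<Rightarrow> (nat \<Rightarrow> ereal) \<Rightarrow> nat \<Rightarrow> ereal" where
  "mat_apply p A lam j = (SUP k\<in>{..<p}. A j k \<oplus> lam k)"

definition mat_res :: "nat \<Rightarrow> (nat \<Rightarrow> nat \<Rightarrow> ereal) \<Rightarrow> (nat \<Rightarrow> ereal) \<Rightarrow> nat \<Rightarrow> ereal" where
  "mat_res q A mu i = (INF j\<in>{..<q}. mp_res (A j i) (mu j))"

text \<open>Coefficient vectors of the ideal max-plus finite element method, lambda^{k delta}.\<close>
fun mpfem_coeffs ::
  "('x::euclidean_space) set \<Rightarrow> ('u::euclidean_space) set \<Rightarrow> ('x \<Rightarrow> 'u \<Rightarrow> real)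
   \<Rightarrow> ('x \<Rightarrow> 'u \<Rightarrow> 'x) \<Rightarrow> ('x \<Rightarrow> ereal) \<Rightarrow> nat \<Rightarrow> (nat \<Rightarrow> 'x \<Rightarrow> ereal)
   \<Rightarrow> nat \<Rightarrow> (nat \<Rightarrow> 'x \<Rightarrow> ereal) \<Rightarrow> real \<Rightarrow> nat \<Rightarrow> nat \<Rightarrow> ereal" where
  "mpfem_coeffs X U lc f \<phi> p w q z \<delta> 0 = W_res X w \<phi>"
| "mpfem_coeffs X U lc f \<phi> p w q z \<delta> (Suc k) =
     mat_res q (\<lambda>j i. pairing X (z j) (w i))
       (mat_apply p (\<lambda>j i. pairing X (z j) (S_op X U lc f \<delta> (w i)))
          (mpfem_coeffs X U lc f \<phi> p w q z \<delta> k))"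

end

theory Submission
  imports Defs
begin

lemma mpp_simps[simp]: "a \<oplus> -\<infinity> = -\<infinity>" "-\<infinity> \<oplus> a = -\<infinity>" "a \<oplus> 0 = a" "0 \<oplus> a = a"
  "ereal r \<oplus> ereal s = ereal (r + s)"
  by (auto simp: mp_plus_def)

lemma mpp_comm: "a \<oplus> b = b \<oplus> a"
  by (auto simp: mp_plus_def add.commute)

lemma mpp_assoc: "(a \<oplus> b) \<oplus> c = a \<oplus> (b \<oplus> c)"
  by (cases a; cases b; cases c) (auto simp: mp_plus_def)

lemma mpp_mono: "a \<le> b \<Longrightarrow> c \<le> d \<Longrightarrow> a \<oplus> c \<le> b \<oplus> d"
  by (cases a; cases b; cases c; cases d) (auto simp: mp_plus_def)

lemma mpp_Sup: "a \<oplus> Sup B = Sup ((\<oplus>) a ` B)"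
proof (rule antisym)
  show "Sup ((\<oplus>) a ` B) \<le> a \<oplus> Sup B"
    by (auto intro!: Sup_least mpp_mono Sup_upper)
  show "a \<oplus> Sup B \<le> Sup ((\<oplus>) a ` B)"
  proof (cases "a = -\<infinity> \<or> Sup B = -\<infinity>")
    case True then show ?thesis by auto
  next
    case False
    then obtain b where b: "b \<in> B" "b \<noteq> -\<infinity>"
      unfolding Sup_eq_MInfty by blast
    show ?thesis
    proof (cases a)
      case PInf
      then have "a \<oplus> b = \<infinity>" using b by (cases b) (auto simp: mp_plus_def)
      then have "\<infinity> \<le> Sup ((\<oplus>) a ` B)" using b by (metis SUP_upper)
      then show ?thesis by simp
    next
      case (real r)
      have "a \<oplus> Sup B = a + Sup B" using False by (simp add: mp_plus_def)
      also have "\<dots> = (SUP x\<in>B. a + x)"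
        using SUP_ereal_add_right[of B a "\<lambda>x. x"] b(1) real by (cases "B = {}") auto
      also have "\<dots> = Sup ((\<oplus>) a ` B)"
        using real by (intro SUP_cong) (auto simp: mp_plus_def)
      finally show ?thesis by simp
    qed (use False in auto)
  qed
qed

lemma mpp_SUP: "a \<oplus> (SUP i\<in>I. f i) = (SUP i\<in>I. a \<oplus> f i)"
  using mpp_Sup[of a "f ` I"] by (simp add: image_image)

lemma mpp_SUP2: "(SUP i\<in>I. f i) \<oplus> a = (SUP i\<in>I. f i \<oplus> a)"
  using mpp_SUP[of a f I] by (simp add: mpp_comm)

lemma mp_res_galois: "l \<le> mp_res a b \<longleftrightarrow> a \<oplus> l \<le> b"
proof
  assume "a \<oplus> l \<le> b" then show "l \<le> mp_res a b"
    unfolding mp_res_def by (auto intro: Sup_upper)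
next
  assume "l \<le> mp_res a b"
  then have "a \<oplus> l \<le> a \<oplus> mp_res a b" by (auto intro: mpp_mono)
  also have "\<dots> = Sup ((\<oplus>) a ` {l. a \<oplus> l \<le> b})" unfolding mp_res_def by (rule mpp_Sup)
  also have "\<dots> \<le> b" by (auto intro: Sup_least)
  finally show "a \<oplus> l \<le> b" .
qed

lemma ereal_le_ext: "(\<And>l::ereal. l \<le> x \<longleftrightarrow> l \<le> y) \<Longrightarrow> x = y"
  by (metis order.antisym order.refl)

lemma mp_res_INF: "mp_res a (INF i\<in>I. c i) = (INF i\<in>I. mp_res a (c i))"
  by (rule ereal_le_ext) (simp add: mp_res_galois le_INF_iff)

lemma mp_res_SUP: "mp_res (SUP i\<in>I. a i) c = (INF i\<in>I. mp_res (a i) c)"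
  by (rule ereal_le_ext) (simp add: mp_res_galois le_INF_iff mpp_SUP2 SUP_le_iff)

lemma mp_res_res: "mp_res a (mp_res b c) = mp_res (b \<oplus> a) c"
  by (rule ereal_le_ext) (simp add: mp_res_galois mpp_assoc)

lemma mp_res_mono: "b \<le> c \<Longrightarrow> mp_res a b \<le> mp_res a c"
  by (metis mp_res_galois order.refl order.trans)

lemma mpp_cancel: "(a \<oplus> ereal c) \<oplus> ereal (-c) = a"
  by (cases a) (auto simp: mp_plus_def)

lemma mpp_shift: "x \<le> y \<oplus> ereal c \<longleftrightarrow> x \<oplus> ereal (-c) \<le> y"
  by (cases x; cases y) (auto simp: mp_plus_def)

lemma mp_res_plus: "mp_res a (b \<oplus> ereal c) = mp_res a b \<oplus> ereal c"
  by (rule ereal_le_ext) (simp add: mp_res_galois mpp_shift mpp_assoc)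


definition close :: "'x set \<Rightarrow> ('x \<Rightarrow> ereal) \<Rightarrow> ('x \<Rightarrow> ereal) \<Rightarrow> ereal \<Rightarrow> bool" where
  "close X u v l \<longleftrightarrow> (\<forall>x\<in>X. v x \<oplus> (- l) \<le> u x \<and> u x \<le> v x \<oplus> l)"

lemma sd_le: "0 \<le> l \<Longrightarrow> close X u v l \<Longrightarrow> sup_dist X u v \<le> l"
  unfolding sup_dist_def close_def by (auto intro: Inf_lower)

lemma sd_nonneg: "0 \<le> sup_dist X u v"
  unfolding sup_dist_def by (auto intro: Inf_greatest)

lemma sd_mono_rule:
  assumes "\<And>r. 0 \<le> r \<Longrightarrow> close X u v (ereal r) \<Longrightarrow> close X u' v' (ereal r)"
  shows "sup_dist X u' v' \<le> sup_dist X u v"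
  unfolding sup_dist_def[of X u v]
proof (rule Inf_greatest, clarify)
  fix l :: ereal assume l: "0 \<le> l" "\<forall>x\<in>X. v x \<oplus> - l \<le> u x \<and> u x \<le> v x \<oplus> l"
  show "sup_dist X u' v' \<le> l"
  proof (cases l)
    case (real r)
    then show ?thesis using l assms[of r] by (intro sd_le) (auto simp: close_def)
  qed (use l in auto)
qed

lemma sd_cong: "(\<And>x. x \<in> X \<Longrightarrow> u x = u' x) \<Longrightarrow> (\<And>x. x \<in> X \<Longrightarrow> v x = v' x) \<Longrightarrow>
  sup_dist X u v = sup_dist X u' v'"
  unfolding sup_dist_def by (intro arg_cong[where f=Inf]) auto

lemma close_trans: "close X u v a \<Longrightarrow> close X v w b \<Longrightarrow> 0 \<le> a \<Longrightarrow> 0 \<le> b \<Longrightarrow> close X u w (a + b)"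
  unfolding close_def
proof (intro ballI conjI)
  fix x assume x: "x \<in> X" and A: "\<forall>x\<in>X. v x \<oplus> - a \<le> u x \<and> u x \<le> v x \<oplus> a"
    and B: "\<forall>x\<in>X. w x \<oplus> - b \<le> v x \<and> v x \<le> w x \<oplus> b" and a: "0 \<le> a" and b: "0 \<le> b"
  have "(w x \<oplus> - b) \<oplus> - a \<le> u x" using A B x by (meson mpp_mono order.refl order_trans)
  moreover have "(w x \<oplus> - b) \<oplus> - a = w x \<oplus> - (a + b)"
    using a b by (cases a; cases b; cases "w x") (auto simp: mp_plus_def)
  ultimately show "w x \<oplus> - (a + b) \<le> u x" by simp
  have "u x \<le> (w x \<oplus> b) \<oplus> a" using A B x by (meson mpp_mono order.refl order_trans)
  moreover have "(w x \<oplus> b) \<oplus> a = w x \<oplus> (a + b)"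
    using a b by (cases a; cases b; cases "w x") (auto simp: mp_plus_def)
  ultimately show "u x \<le> w x \<oplus> (a + b)" by simp
qed

lemma sd_triangle: "sup_dist X u w \<le> sup_dist X u v + sup_dist X v w"
proof -
  let ?A = "{l. 0 \<le> l \<and> (\<forall>x\<in>X. v x \<oplus> (- l) \<le> u x \<and> u x \<le> v x \<oplus> l)}"
  let ?B = "{l. 0 \<le> l \<and> (\<forall>x\<in>X. w x \<oplus> (- l) \<le> v x \<and> v x \<le> w x \<oplus> l)}"
  have key: "sup_dist X u w \<le> a + b" if "a \<in> ?A" "b \<in> ?B" for a b
  proof -
    have 1: "close X u v a" "0 \<le> a" using that(1) unfolding close_def by simp_all
    have 2: "close X v w b" "0 \<le> b" using that(2) unfolding close_def by simp_all
    have "0 \<le> a + b" using 1(2) 2(2) by simp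
    then show ?thesis using close_trans[OF 1(1) 2(1) 1(2) 2(2)] by (rule sd_le)
  qed
  have posA: "\<And>a. a \<in> ?A \<Longrightarrow> 0 \<le> a" by simp
  have posB: "\<And>a. a \<in> ?B \<Longrightarrow> 0 \<le> a" by simp
  have step1: "sup_dist X u w \<le> Inf ?A + b" if b: "b \<in> ?B" for b
  proof (cases "?A = {}")
    case True then have "Inf ?A = \<infinity>" unfolding top_ereal_def[symmetric] by (simp only: Inf_empty)
    then show ?thesis by simp
  next
    case False
    have bn: "b \<noteq> -\<infinity>" using posB[OF b] by auto
    have "(INF a\<in>?A. a + b) = (INF a\<in>?A. a) + b"
      by (rule INF_ereal_add_left[OF False bn posA])
    then have eq: "Inf ?A + b = (INF a\<in>?A. a + b)" by simp
    have "sup_dist X u w \<le> (INF a\<in>?A. a + b)"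
      by (rule INF_greatest) (rule key[OF _ b])
    then show ?thesis unfolding eq .
  qed
  have nn: "0 \<le> Inf ?A" by (rule Inf_greatest) (rule posA)
  have "sup_dist X u w \<le> Inf ?A + Inf ?B"
  proof (cases "?B = {}")
    case True then have "Inf ?B = \<infinity>" unfolding top_ereal_def[symmetric] by (simp only: Inf_empty)
    then show ?thesis using nn by simp
  next
    case False
    have an: "Inf ?A \<noteq> -\<infinity>" using nn by auto
    have "(INF b\<in>?B. Inf ?A + b) = Inf ?A + (INF b\<in>?B. b)"
      by (rule INF_ereal_add_right[OF False an posB])
    then have eq: "Inf ?A + Inf ?B = (INF b\<in>?B. Inf ?A + b)" by simp
    have "sup_dist X u w \<le> (INF b\<in>?B. Inf ?A + b)"
      by (rule INF_greatest) (rule step1)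
    then show ?thesis unfolding eq .
  qed
  then show ?thesis unfolding sup_dist_def .
qed

definition nonexp :: "'x set \<Rightarrow> (('x \<Rightarrow> ereal) \<Rightarrow> 'x \<Rightarrow> ereal) \<Rightarrow> bool" where
  "nonexp X F \<longleftrightarrow> (\<forall>g h. (\<forall>x\<in>X. g x \<le> h x) \<longrightarrow> (\<forall>x\<in>X. F g x \<le> F h x)) \<and>
     (\<forall>g c. \<forall>x\<in>X. F (\<lambda>y. g y \<oplus> ereal c) x \<le> F g x \<oplus> ereal c)"

lemma nonexp_sd:
  assumes "nonexp X F" shows "sup_dist X (F g) (F h) \<le> sup_dist X g h"
proof (rule sd_mono_rule)
  fix r :: real assume "0 \<le> r" and c: "close X g h (ereal r)"
  have mono: "\<And>g h. (\<forall>x\<in>X. g x \<le> h x) \<Longrightarrow> (\<forall>x\<in>X. F g x \<le> F h x)"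
    and sh: "\<And>g c x. x \<in> X \<Longrightarrow> F (\<lambda>y. g y \<oplus> ereal c) x \<le> F g x \<oplus> ereal c"
    using assms unfolding nonexp_def by blast+
  have h_eq: "(\<lambda>y. (h y \<oplus> ereal (-r)) \<oplus> ereal r) = h"
    using mpp_cancel[of _ "-r"] by simp
  show "close X (F g) (F h) (ereal r)"
    unfolding close_def
  proof (intro ballI conjI)
    fix x assume x: "x \<in> X"
    have "F g x \<le> F (\<lambda>y. h y \<oplus> ereal r) x" using mono[of g "\<lambda>y. h y \<oplus> ereal r"] c x
      by (auto simp: close_def)
    also have "\<dots> \<le> F h x \<oplus> ereal r" using sh x by blast
    finally show "F g x \<le> F h x \<oplus> ereal r" .
    have "F h x \<le> F (\<lambda>y. h y \<oplus> ereal (-r)) x \<oplus> ereal r"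
      using sh[OF x, of "\<lambda>y. h y \<oplus> ereal (-r)" r] h_eq by simp
    also have "\<dots> \<le> F g x \<oplus> ereal r"
      using mono[of "\<lambda>y. h y \<oplus> ereal (-r)" g] c x by (auto simp: close_def intro: mpp_mono)
    finally show "F h x \<oplus> - ereal r \<le> F g x" by (simp add: mpp_shift)
  qed
qed

lemma mpp_INF: "(INF i\<in>I. f i) \<oplus> ereal c = (INF i\<in>I. f i \<oplus> ereal c)"
  by (rule ereal_le_ext) (simp add: mpp_shift le_INF_iff)


lemma S_op_alt: "S_op X U lc f t g x0 =
  (SUP p\<in>{(u, xx). admissible X U lc f t x0 u xx}.
     ereal (set_lebesgue_integral lborel {0..t} (\<lambda>s. lc (snd p s) (fst p s))) \<oplus> g (snd p t))"
  unfolding S_op_def by (simp add: case_prod_beta)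

lemma S_op_shift: "S_op X U lc f t (\<lambda>y. g y \<oplus> c) x = S_op X U lc f t g x \<oplus> c"
  unfolding S_op_alt mpp_SUP2 by (simp add: mpp_assoc)

lemma S_op_SUP: "S_op X U lc f t (\<lambda>y. SUP k\<in>K. g k y) x = (SUP k\<in>K. S_op X U lc f t (g k) x)"
  unfolding S_op_alt mpp_SUP by (rule SUP_commute)

lemma adm_X: "admissible X U lc f t x0 u xx \<Longrightarrow> 0 \<le> t \<Longrightarrow> xx t \<in> X"
  unfolding admissible_def by auto

lemma S_op_mono: assumes "0 \<le> t" "\<forall>x\<in>X. g x \<le> h x"
  shows "S_op X U lc f t g x \<le> S_op X U lc f t h x"
  unfolding S_op_alt
proof (intro SUP_subset_mono order.refl mpp_mono)
  fix pp assume "pp \<in> {(u, xx). admissible X U lc f t x u xx}"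
  then have "snd pp t \<in> X" using adm_X[of X U lc f t x "fst pp" "snd pp"] assms(1) by auto
  then show "g (snd pp t) \<le> h (snd pp t)" using assms(2) by blast
qed

lemma S_op_nonexp: "0 \<le> t \<Longrightarrow> nonexp X (S_op X U lc f t)"
  unfolding nonexp_def using S_op_mono S_op_shift by (metis order.refl)

lemma pairing_shift: "pairing X z (\<lambda>y. g y \<oplus> c) = pairing X z g \<oplus> c"
  unfolding pairing_def mpp_SUP2 by (simp add: mpp_assoc)

lemma pairing_mono: "\<forall>x\<in>X. g x \<le> h x \<Longrightarrow> pairing X z g \<le> pairing X z h"
  unfolding pairing_def by (intro SUP_subset_mono order.refl mpp_mono) auto

lemma projZ_nonexp: "nonexp X (proj_Z X q z)"
  unfolding nonexp_def
proof (intro conjI allI impI ballI)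
  fix g h :: "'a \<Rightarrow> ereal" and x assume "\<forall>x\<in>X. g x \<le> h x"
  then show "proj_Z X q z g x \<le> proj_Z X q z h x"
    unfolding proj_Z_def by (intro INF_superset_mono order.refl mp_res_mono pairing_mono)
next
  fix g :: "'a \<Rightarrow> ereal" and c x
  show "proj_Z X q z (\<lambda>y. g y \<oplus> ereal c) x \<le> proj_Z X q z g x \<oplus> ereal c"
    unfolding proj_Z_def pairing_shift mp_res_plus mpp_INF by simp
qed

lemma W_res_shift: "W_res X w (\<lambda>y. g y \<oplus> ereal c) i = W_res X w g i \<oplus> ereal c"
  unfolding W_res_def mp_res_plus mpp_INF by simp

lemma projW_nonexp: "nonexp X (proj_W X p w)"
  unfolding nonexp_def
proof (intro conjI allI impI ballI)
  fix g h :: "'a \<Rightarrow> ereal" and x assume "\<forall>x\<in>X. g x \<le> h x"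
  then have "W_res X w g i \<le> W_res X w h i" for i
    unfolding W_res_def by (intro INF_superset_mono order.refl mp_res_mono) auto
  then show "proj_W X p w g x \<le> proj_W X p w h x"
    unfolding proj_W_def W_op_def by (intro SUP_subset_mono order.refl mpp_mono)
next
  fix g :: "'a \<Rightarrow> ereal" and c x
  show "proj_W X p w (\<lambda>y. g y \<oplus> ereal c) x \<le> proj_W X p w g x \<oplus> ereal c"
    unfolding proj_W_def W_op_def W_res_shift mpp_SUP2 by (simp add: mpp_assoc)
qed

lemma algo_step:
  "W_op p w (mpfem_coeffs X U lc f \<phi> p w q z \<delta> (Suc k)) x =
   proj_W X p w (proj_Z X q z (S_op X U lc f \<delta> (W_op p w (mpfem_coeffs X U lc f \<phi> p w q z \<delta> k)))) x"
proof -
  define lam where "lam = mpfem_coeffs X U lc f \<phi> p w q z \<delta> k"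
  define G where "G = S_op X U lc f \<delta> (W_op p w lam)"
  have G_eq: "G y = (SUP k\<in>{..<p}. S_op X U lc f \<delta> (w k) y \<oplus> lam k)" for y
    unfolding G_def W_op_def[abs_def] S_op_SUP S_op_shift ..
  have mu: "mat_apply p (\<lambda>j i. pairing X (z j) (S_op X U lc f \<delta> (w i))) lam j = pairing X (z j) G" for j
  proof -
    have "mat_apply p (\<lambda>j i. pairing X (z j) (S_op X U lc f \<delta> (w i))) lam j
       = (SUP k\<in>{..<p}. SUP y\<in>X. z j y \<oplus> S_op X U lc f \<delta> (w k) y \<oplus> lam k)"
      unfolding mat_apply_def pairing_def mpp_SUP2 ..
    also have "\<dots> = (SUP y\<in>X. SUP k\<in>{..<p}. z j y \<oplus> (S_op X U lc f \<delta> (w k) y \<oplus> lam k))"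
      by (subst SUP_commute) (simp add: mpp_assoc)
    also have "\<dots> = pairing X (z j) G"
      unfolding pairing_def G_eq mpp_SUP ..
    finally show ?thesis .
  qed
  have res: "mpfem_coeffs X U lc f \<phi> p w q z \<delta> (Suc k) i = W_res X w (proj_Z X q z G) i" for i
  proof -
    have "W_res X w (proj_Z X q z G) i
       = (INF y\<in>X. INF j\<in>{..<q}. mp_res (z j y \<oplus> w i y) (pairing X (z j) G))"
      unfolding W_res_def proj_Z_def mp_res_INF mp_res_res ..
    also have "\<dots> = (INF j\<in>{..<q}. INF y\<in>X. mp_res (z j y \<oplus> w i y) (pairing X (z j) G))"
      by (rule INF_commute)
    also have "\<dots> = (INF j\<in>{..<q}. mp_res (pairing X (z j) (w i)) (pairing X (z j) G))"
      unfolding pairing_def mp_res_SUP ..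
    also have "\<dots> = mpfem_coeffs X U lc f \<phi> p w q z \<delta> (Suc k) i"
      by (simp add: lam_def[symmetric] mat_res_def mu)
    finally show ?thesis by simp
  qed
  have eq: "mpfem_coeffs X U lc f \<phi> p w q z \<delta> (Suc k) = W_res X w (proj_Z X q z G)"
    by (intro ext res)
  show ?thesis unfolding proj_W_def eq unfolding G_def lam_def ..
qed


lemma AE_lebesgue_shift:
  assumes "AE x in lebesgue. P x" shows "AE x in lebesgue. P (x + (c::real))"
proof -
  from assms obtain N where N: "N \<in> null_sets lebesgue" "{x \<in> space lebesgue. \<not> P x} \<subseteq> N"
    unfolding eventually_ae_filter by blast
  have "negligible N" using N(1) negligible_iff_null_sets by blast
  then have "negligible ((+) (-c) ` N)" by (rule negligible_translation)
  then have nn: "(+) (-c) ` N \<in> null_sets lebesgue" using negligible_iff_null_sets by blast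
  have "{x \<in> space lebesgue. \<not> P (x + c)} \<subseteq> (+) (-c) ` N"
  proof
    fix x assume "x \<in> {x \<in> space lebesgue. \<not> P (x + c)}"
    then have "x + c \<in> N" using N(2) by auto
    then show "x \<in> (+) (-c) ` N" by (rule rev_image_eqI) simp
  qed
  then show ?thesis unfolding eventually_ae_filter using nn by blast
qed

lemma AE_lebesgue_neq: "AE x in lebesgue. x \<noteq> (c::real)"
  by (rule AE_completion[OF AE_lborel_singleton])

lemma AE_on_iff: "(AE s in lebesgue_on {0..t}. P s) \<longleftrightarrow> (AE s in lebesgue. s \<in> {0..(t::real)} \<longrightarrow> P s)"
  by (rule AE_restrict_space_iff) simp

lemma D_iff:
  "(AE s in lebesgue_on {0..t}. (xx has_vector_derivative F s) (at s within {0..t})) \<longleftrightarrow>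
   (AE s in lebesgue. s \<in> {0<..<(t::real)} \<longrightarrow> (xx has_vector_derivative F s) (at s))"
  unfolding AE_on_iff
proof
  assume "AE s in lebesgue. s \<in> {0..t} \<longrightarrow> (xx has_vector_derivative F s) (at s within {0..t})"
  then show "AE s in lebesgue. s \<in> {0<..<t} \<longrightarrow> (xx has_vector_derivative F s) (at s)"
  proof (rule eventually_mono)
    fix s assume H: "s \<in> {0..t} \<longrightarrow> (xx has_vector_derivative F s) (at s within {0..t})"
    show "s \<in> {0<..<t} \<longrightarrow> (xx has_vector_derivative F s) (at s)"
    proof
      assume s: "s \<in> {0<..<t}"
      then have "at s within {0..t} = at s" by (intro at_within_interior) simp
      then show "(xx has_vector_derivative F s) (at s)" using H s by auto
    qed
  qed
next
  assume H: "AE s in lebesgue. s \<in> {0<..<t} \<longrightarrow> (xx has_vector_derivative F s) (at s)"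
  have "AE s in lebesgue. s \<noteq> 0 \<and> s \<noteq> t \<and> (s \<in> {0<..<t} \<longrightarrow> (xx has_vector_derivative F s) (at s))"
    using H AE_lebesgue_neq[of 0] AE_lebesgue_neq[of t] by eventually_elim auto
  then show "AE s in lebesgue. s \<in> {0..t} \<longrightarrow> (xx has_vector_derivative F s) (at s within {0..t})"
  proof (rule eventually_mono)
    fix s assume "s \<noteq> 0 \<and> s \<noteq> t \<and> (s \<in> {0<..<t} \<longrightarrow> (xx has_vector_derivative F s) (at s))"
    then show "s \<in> {0..t} \<longrightarrow> (xx has_vector_derivative F s) (at s within {0..t})"
      by (auto intro: has_vector_derivative_at_within)
  qed
qed

lemma lebesgue_shift_measurable: "(\<lambda>x::real. x + c) \<in> lebesgue \<rightarrow>\<^sub>M lebesgue"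
  using lebesgue_affine_measurable[of "\<lambda>_. 1" c] by (simp add: add.commute)

lemma bm_shift:
  fixes g :: "real \<Rightarrow> 'b::euclidean_space"
  assumes "g \<in> borel_measurable lebesgue" shows "(\<lambda>x. g (x + c)) \<in> borel_measurable lebesgue"
  using measurable_compose[OF lebesgue_shift_measurable assms] by (simp add: o_def)

lemma bm_on_iff:
  fixes g :: "real \<Rightarrow> 'b::euclidean_space"
  shows "g \<in> borel_measurable (lebesgue_on {c..d}) \<longleftrightarrow> (\<lambda>x. if x \<in> {c..d} then g x else 0) \<in> borel_measurable lebesgue"
  by (rule borel_measurable_if[symmetric]) simp

lemma bm_on_restrict:
  fixes g :: "real \<Rightarrow> 'b::euclidean_space"
  assumes "g \<in> borel_measurable (lebesgue_on {c..d})" "{c'..d'} \<subseteq> {c..d}"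
  shows "g \<in> borel_measurable (lebesgue_on {c'..d'})"
  using measurable_restrict_mono[OF assms] .

lemma bm_on_from_global:
  fixes g h :: "real \<Rightarrow> 'b::euclidean_space"
  assumes "h \<in> borel_measurable lebesgue" "\<And>x. x \<in> {c..d} \<Longrightarrow> g x = h x"
  shows "g \<in> borel_measurable (lebesgue_on {c..d})"
  using measurable_lebesgue_cong[of "{c..d}" g h] assms measurable_restrict_space1[OF assms(1)] by blast

lemma bm_on_shift:
  fixes g :: "real \<Rightarrow> 'b::euclidean_space"
  assumes "g \<in> borel_measurable (lebesgue_on {c..d})"
  shows "(\<lambda>x. g (x + a)) \<in> borel_measurable (lebesgue_on {c-a..d-a})"
proof -
  let ?G = "\<lambda>x. if x \<in> {c..d} then g x else 0"
  have "?G \<in> borel_measurable lebesgue" using assms bm_on_iff by blast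
  then have "(\<lambda>x. ?G (x + a)) \<in> borel_measurable lebesgue" by (rule bm_shift)
  then show ?thesis by (rule bm_on_from_global) auto
qed

lemma null_delta_Ico:
  fixes G :: "real \<Rightarrow> real"
  assumes "set_integrable lborel {0..a} G"
  shows "(LINT x:{0..<a}|lborel. G x) = (LINT x:{0..a}|lborel. G x)"
proof -
  have m2: "(\<lambda>x. indicator {0..a} x *\<^sub>R G x) \<in> borel_measurable lborel"
    using assms unfolding set_integrable_def by (rule borel_measurable_integrable)
  have "(\<lambda>x. indicator {0..<a} x *\<^sub>R (indicator {0..a} x *\<^sub>R G x)) \<in> borel_measurable lborel"
    using m2 by measurable
  moreover have "(\<lambda>x. indicator {0..<a} x *\<^sub>R (indicator {0..a} x *\<^sub>R G x)) = (\<lambda>x. indicator {0..<a} x *\<^sub>R G x)"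
    by (auto simp: fun_eq_iff split: split_indicator)
  ultimately have m1: "(\<lambda>x. indicator {0..<a} x *\<^sub>R G x) \<in> borel_measurable lborel" by simp
  have "AE x in lborel. indicator {0..<a} x *\<^sub>R G x = indicator {0..a} x *\<^sub>R G x"
    using AE_lborel_singleton[of a] by eventually_elim (auto split: split_indicator)
  then show ?thesis unfolding set_lebesgue_integral_def by (rule integral_cong_AE[OF m1 m2])
qed

lemma shift_int:
  fixes G :: "real \<Rightarrow> real"
  assumes "set_integrable lborel {c..d} G" "c' = c - a" "d' = d - a"
  shows "set_integrable lborel {c'..d'} (\<lambda>x. G (x + a))"
    and "(LINT x:{c'..d'}|lborel. G (x + a)) = (LINT x:{c..d}|lborel. G x)"
proof -
  have eq: "(\<lambda>x. indicator {c..d} (a + 1 * x) *\<^sub>R G (a + 1 * x)) = (\<lambda>x. indicator {c'..d'} x *\<^sub>R G (x + a))"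
    using assms(2,3) by (auto simp: fun_eq_iff add.commute split: split_indicator)
  have i: "integrable lborel (\<lambda>x. indicator {c..d} x *\<^sub>R G x)" using assms(1) unfolding set_integrable_def .
  show "set_integrable lborel {c'..d'} (\<lambda>x. G (x + a))"
    using lborel_integrable_real_affine[OF i, of 1 a] unfolding set_integrable_def eq by simp
  show "(LINT x:{c'..d'}|lborel. G (x + a)) = (LINT x:{c..d}|lborel. G x)"
    using lborel_integral_real_affine[of 1 "\<lambda>x. indicator {c..d} x *\<^sub>R G x" a]
    unfolding set_lebesgue_integral_def eq by simp
qed

lemma split_int:
  fixes G :: "real \<Rightarrow> real"
  assumes "set_integrable lborel {0..<a} G" "set_integrable lborel {a..a+b} G" "0 \<le> a" "0 \<le> b"
  shows "set_integrable lborel {0..a+b} G"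
    and "(LINT x:{0..a+b}|lborel. G x) = (LINT x:{0..<a}|lborel. G x) + (LINT x:{a..a+b}|lborel. G x)"
proof -
  have U: "{0..a+b} = {0..<a} \<union> {a..a+b}" using assms(3,4) by auto
  show "set_integrable lborel {0..a+b} G" unfolding U
    by (rule set_integrable_Un[OF assms(1,2)]) auto
  show "(LINT x:{0..a+b}|lborel. G x) = (LINT x:{0..<a}|lborel. G x) + (LINT x:{a..a+b}|lborel. G x)"
    unfolding U by (rule set_integral_Un[OF _ assms(1,2)]) auto
qed

lemma set_integrable_cong_on:
  fixes G H :: "real \<Rightarrow> real"
  assumes "\<And>x. x \<in> A \<Longrightarrow> G x = H x"
  shows "set_integrable lborel A G \<longleftrightarrow> set_integrable lborel A H"
    and "(LINT x:A|lborel. G x) = (LINT x:A|lborel. H x)"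
proof -
  have eq: "(\<lambda>x. indicator A x *\<^sub>R G x) = (\<lambda>x. indicator A x *\<^sub>R H x)"
    using assms by (auto simp: fun_eq_iff split: split_indicator)
  show "set_integrable lborel A G \<longleftrightarrow> set_integrable lborel A H"
    unfolding set_integrable_def eq ..
  show "(LINT x:A|lborel. G x) = (LINT x:A|lborel. H x)"
    unfolding set_lebesgue_integral_def eq ..
qed


lemma ac_restrict:
  assumes "abs_cont_on t x" "t' \<le> t" shows "abs_cont_on t' x"
  unfolding abs_cont_on_def
proof (intro allI impI)
  fix e :: real assume "e > 0"
  then obtain d where d: "d > 0" and D: "\<And>(n::nat) (\<alpha>::nat\<Rightarrow>real) \<beta>.
        (\<forall>k<n. 0 \<le> \<alpha> k \<and> \<alpha> k \<le> \<beta> k \<and> \<beta> k \<le> t) \<and>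
        (\<forall>k<n. \<forall>j<n. k \<noteq> j \<longrightarrow> {\<alpha> k<..<\<beta> k} \<inter> {\<alpha> j<..<\<beta> j} = {}) \<and>
        (\<Sum>k<n. \<beta> k - \<alpha> k) < d
        \<longrightarrow> (\<Sum>k<n. norm (x (\<beta> k) - x (\<alpha> k))) < e"
    using assms(1) unfolding abs_cont_on_def by blast
  show "\<exists>d>0. \<forall>(n::nat) (\<alpha>::nat\<Rightarrow>real) \<beta>.
        (\<forall>k<n. 0 \<le> \<alpha> k \<and> \<alpha> k \<le> \<beta> k \<and> \<beta> k \<le> t') \<and>
        (\<forall>k<n. \<forall>j<n. k \<noteq> j \<longrightarrow> {\<alpha> k<..<\<beta> k} \<inter> {\<alpha> j<..<\<beta> j} = {}) \<and>
        (\<Sum>k<n. \<beta> k - \<alpha> k) < d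
        \<longrightarrow> (\<Sum>k<n. norm (x (\<beta> k) - x (\<alpha> k))) < e"
  proof (intro exI[of _ d] conjI d allI impI)
    fix n :: nat and \<alpha> \<beta> :: "nat \<Rightarrow> real"
    assume H: "(\<forall>k<n. 0 \<le> \<alpha> k \<and> \<alpha> k \<le> \<beta> k \<and> \<beta> k \<le> t') \<and>
        (\<forall>k<n. \<forall>j<n. k \<noteq> j \<longrightarrow> {\<alpha> k<..<\<beta> k} \<inter> {\<alpha> j<..<\<beta> j} = {}) \<and>
        (\<Sum>k<n. \<beta> k - \<alpha> k) < d"
    then have "\<forall>k<n. 0 \<le> \<alpha> k \<and> \<alpha> k \<le> \<beta> k \<and> \<beta> k \<le> t" using assms(2) by force
    then show "(\<Sum>k<n. norm (x (\<beta> k) - x (\<alpha> k))) < e" using D[of n \<alpha> \<beta>] H by blast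
  qed
qed

lemma ac_shift:
  fixes x :: "real \<Rightarrow> 'a::real_normed_vector"
  assumes ac: "abs_cont_on (a + b) x" and a: "0 \<le> a"
  shows "abs_cont_on b (\<lambda>r. x (r + a))"
  unfolding abs_cont_on_def
proof (intro allI impI)
  fix e :: real assume "e > 0"
  then obtain d where d: "d > 0" and D: "\<And>(n::nat) (\<alpha>::nat\<Rightarrow>real) \<beta>.
        (\<forall>k<n. 0 \<le> \<alpha> k \<and> \<alpha> k \<le> \<beta> k \<and> \<beta> k \<le> a + b) \<and>
        (\<forall>k<n. \<forall>j<n. k \<noteq> j \<longrightarrow> {\<alpha> k<..<\<beta> k} \<inter> {\<alpha> j<..<\<beta> j} = {}) \<and>
        (\<Sum>k<n. \<beta> k - \<alpha> k) < d
        \<longrightarrow> (\<Sum>k<n. norm (x (\<beta> k) - x (\<alpha> k))) < e"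
    using ac unfolding abs_cont_on_def by blast
  show "\<exists>d>0. \<forall>(n::nat) (\<alpha>::nat\<Rightarrow>real) \<beta>.
        (\<forall>k<n. 0 \<le> \<alpha> k \<and> \<alpha> k \<le> \<beta> k \<and> \<beta> k \<le> b) \<and>
        (\<forall>k<n. \<forall>j<n. k \<noteq> j \<longrightarrow> {\<alpha> k<..<\<beta> k} \<inter> {\<alpha> j<..<\<beta> j} = {}) \<and>
        (\<Sum>k<n. \<beta> k - \<alpha> k) < d
        \<longrightarrow> (\<Sum>k<n. norm (x (\<beta> k + a) - x (\<alpha> k + a))) < e"
  proof (intro exI[of _ d] conjI d allI impI)
    fix n :: nat and \<alpha> \<beta> :: "nat \<Rightarrow> real"
    assume H: "(\<forall>k<n. 0 \<le> \<alpha> k \<and> \<alpha> k \<le> \<beta> k \<and> \<beta> k \<le> b) \<and>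
        (\<forall>k<n. \<forall>j<n. k \<noteq> j \<longrightarrow> {\<alpha> k<..<\<beta> k} \<inter> {\<alpha> j<..<\<beta> j} = {}) \<and>
        (\<Sum>k<n. \<beta> k - \<alpha> k) < d"
    have 1: "\<forall>k<n. 0 \<le> \<alpha> k + a \<and> \<alpha> k + a \<le> \<beta> k + a \<and> \<beta> k + a \<le> a + b" using H a by auto
    have 2: "\<forall>k<n. \<forall>j<n. k \<noteq> j \<longrightarrow> {\<alpha> k + a<..<\<beta> k + a} \<inter> {\<alpha> j + a<..<\<beta> j + a} = {}"
    proof (intro allI impI)
      fix k j assume kj: "k < n" "j < n" "k \<noteq> j"
      show "{\<alpha> k + a<..<\<beta> k + a} \<inter> {\<alpha> j + a<..<\<beta> j + a} = {}"
      proof (rule ccontr)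
        assume "{\<alpha> k + a<..<\<beta> k + a} \<inter> {\<alpha> j + a<..<\<beta> j + a} \<noteq> {}"
        then obtain y where "y \<in> {\<alpha> k + a<..<\<beta> k + a} \<inter> {\<alpha> j + a<..<\<beta> j + a}" by blast
        then have "y - a \<in> {\<alpha> k<..<\<beta> k} \<inter> {\<alpha> j<..<\<beta> j}" by auto
        then show False using H kj by blast
      qed
    qed
    have 3: "(\<Sum>k<n. (\<beta> k + a) - (\<alpha> k + a)) < d" using H by simp
    show "(\<Sum>k<n. norm (x (\<beta> k + a) - x (\<alpha> k + a))) < e"
      using D[of n "\<lambda>k. \<alpha> k + a" "\<lambda>k. \<beta> k + a"] 1 2 3 by blast
  qed
qed

lemma norm_split_min_max:
  fixes x :: "real \<Rightarrow> 'a::real_normed_vector"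
  assumes "\<alpha> \<le> \<beta>"
  shows "norm (x \<beta> - x \<alpha>) \<le> norm (x (min \<beta> a) - x (min \<alpha> a)) + norm (x (max \<beta> a) - x (max \<alpha> a))"
proof (cases "\<beta> \<le> a")
  case True then show ?thesis using assms by (simp add: min_absorb1 max_absorb2)
next
  case False
  show ?thesis
  proof (cases "a \<le> \<alpha>")
    case True then show ?thesis using assms False by (simp add: min_absorb2 max_absorb1)
  next
    case False2: False
    have "x \<beta> - x \<alpha> = (x a - x \<alpha>) + (x \<beta> - x a)" by simp
    then have "norm (x \<beta> - x \<alpha>) \<le> norm (x a - x \<alpha>) + norm (x \<beta> - x a)" by (metis norm_triangle_ineq)
    then show ?thesis using False False2 by (simp add: min_def max_def)
  qed
qed

lemma ac_concat:
  fixes x1 x2 :: "real \<Rightarrow> 'a::real_normed_vector"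
  assumes ac1: "abs_cont_on a x1" and ac2: "abs_cont_on b x2" and j: "x2 0 = x1 a" and a: "0 \<le> a" and b: "0 \<le> b"
  shows "abs_cont_on (a + b) (\<lambda>r. if r \<le> a then x1 r else x2 (r - a))"
  unfolding abs_cont_on_def
proof (intro allI impI)
  fix e :: real assume e: "e > 0"
  then have e2: "e/2 > 0" by simp
  let ?x = "\<lambda>r. if r \<le> a then x1 r else x2 (r - a)"
  obtain d1 where d1: "d1 > 0" and D1: "\<And>(n::nat) (\<alpha>::nat\<Rightarrow>real) \<beta>.
        (\<forall>k<n. 0 \<le> \<alpha> k \<and> \<alpha> k \<le> \<beta> k \<and> \<beta> k \<le> a) \<and>
        (\<forall>k<n. \<forall>j<n. k \<noteq> j \<longrightarrow> {\<alpha> k<..<\<beta> k} \<inter> {\<alpha> j<..<\<beta> j} = {}) \<and>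
        (\<Sum>k<n. \<beta> k - \<alpha> k) < d1
        \<longrightarrow> (\<Sum>k<n. norm (x1 (\<beta> k) - x1 (\<alpha> k))) < e/2"
    using ac1 e2 unfolding abs_cont_on_def by blast
  obtain d2 where d2: "d2 > 0" and D2: "\<And>(n::nat) (\<alpha>::nat\<Rightarrow>real) \<beta>.
        (\<forall>k<n. 0 \<le> \<alpha> k \<and> \<alpha> k \<le> \<beta> k \<and> \<beta> k \<le> b) \<and>
        (\<forall>k<n. \<forall>j<n. k \<noteq> j \<longrightarrow> {\<alpha> k<..<\<beta> k} \<inter> {\<alpha> j<..<\<beta> j} = {}) \<and>
        (\<Sum>k<n. \<beta> k - \<alpha> k) < d2
        \<longrightarrow> (\<Sum>k<n. norm (x2 (\<beta> k) - x2 (\<alpha> k))) < e/2"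
    using ac2 e2 unfolding abs_cont_on_def by blast
  show "\<exists>d>0. \<forall>(n::nat) (\<alpha>::nat\<Rightarrow>real) \<beta>.
        (\<forall>k<n. 0 \<le> \<alpha> k \<and> \<alpha> k \<le> \<beta> k \<and> \<beta> k \<le> a + b) \<and>
        (\<forall>k<n. \<forall>j<n. k \<noteq> j \<longrightarrow> {\<alpha> k<..<\<beta> k} \<inter> {\<alpha> j<..<\<beta> j} = {}) \<and>
        (\<Sum>k<n. \<beta> k - \<alpha> k) < d
        \<longrightarrow> (\<Sum>k<n. norm (?x (\<beta> k) - ?x (\<alpha> k))) < e"
  proof (intro exI[of _ "min d1 d2"] conjI allI impI)
    show "0 < min d1 d2" using d1 d2 by simp
    fix n :: nat and \<alpha> \<beta> :: "nat \<Rightarrow> real"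
    assume H: "(\<forall>k<n. 0 \<le> \<alpha> k \<and> \<alpha> k \<le> \<beta> k \<and> \<beta> k \<le> a + b) \<and>
        (\<forall>k<n. \<forall>j<n. k \<noteq> j \<longrightarrow> {\<alpha> k<..<\<beta> k} \<inter> {\<alpha> j<..<\<beta> j} = {}) \<and>
        (\<Sum>k<n. \<beta> k - \<alpha> k) < min d1 d2"
    have H1: "\<And>k. k < n \<Longrightarrow> 0 \<le> \<alpha> k \<and> \<alpha> k \<le> \<beta> k \<and> \<beta> k \<le> a + b" using H by blast
    have H2: "\<And>k j. k < n \<Longrightarrow> j < n \<Longrightarrow> k \<noteq> j \<Longrightarrow> {\<alpha> k<..<\<beta> k} \<inter> {\<alpha> j<..<\<beta> j} = {}"
      using H by blast
    have H3: "(\<Sum>k<n. \<beta> k - \<alpha> k) < min d1 d2" using H by blast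
    define \<alpha>1 where "\<alpha>1 k = min (\<alpha> k) a" for k
    define \<beta>1 where "\<beta>1 k = min (\<beta> k) a" for k
    define \<alpha>2 where "\<alpha>2 k = max (\<alpha> k) a - a" for k
    define \<beta>2 where "\<beta>2 k = max (\<beta> k) a - a" for k
    have sub1: "{\<alpha>1 k<..<\<beta>1 k} \<subseteq> {\<alpha> k<..<\<beta> k}" for k
      unfolding \<alpha>1_def \<beta>1_def by (auto simp: min_def)
    have sub2: "y + a \<in> {\<alpha> k<..<\<beta> k}" if "y \<in> {\<alpha>2 k<..<\<beta>2 k}" for k y
      using that unfolding \<alpha>2_def \<beta>2_def by (auto simp: max_def split: if_splits)
    have c1: "(\<forall>k<n. 0 \<le> \<alpha>1 k \<and> \<alpha>1 k \<le> \<beta>1 k \<and> \<beta>1 k \<le> a) \<and>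
        (\<forall>k<n. \<forall>j<n. k \<noteq> j \<longrightarrow> {\<alpha>1 k<..<\<beta>1 k} \<inter> {\<alpha>1 j<..<\<beta>1 j} = {}) \<and>
        (\<Sum>k<n. \<beta>1 k - \<alpha>1 k) < d1"
    proof (intro conjI allI impI)
      fix k assume k: "k < n"
      have "0 \<le> \<alpha> k" "\<alpha> k \<le> \<beta> k" using H1[OF k] by auto
      then show "0 \<le> \<alpha>1 k" "\<alpha>1 k \<le> \<beta>1 k" "\<beta>1 k \<le> a" using a unfolding \<alpha>1_def \<beta>1_def by auto
    next
      fix k j assume kj: "k < n" "j < n" "k \<noteq> j"
      have "{\<alpha>1 k<..<\<beta>1 k} \<inter> {\<alpha>1 j<..<\<beta>1 j} \<subseteq> {\<alpha> k<..<\<beta> k} \<inter> {\<alpha> j<..<\<beta> j}"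
        using sub1[of k] sub1[of j] by blast
      then show "{\<alpha>1 k<..<\<beta>1 k} \<inter> {\<alpha>1 j<..<\<beta>1 j} = {}" using H2[OF kj] by blast
    next
      have "(\<Sum>k<n. \<beta>1 k - \<alpha>1 k) \<le> (\<Sum>k<n. \<beta> k - \<alpha> k)"
      proof (rule sum_mono)
        fix k assume "k \<in> {..<n}"
        then have "\<alpha> k \<le> \<beta> k" using H1 by auto
        then show "\<beta>1 k - \<alpha>1 k \<le> \<beta> k - \<alpha> k" unfolding \<alpha>1_def \<beta>1_def by (auto simp: min_def)
      qed
      then show "(\<Sum>k<n. \<beta>1 k - \<alpha>1 k) < d1" using H3 by simp
    qed
    have c2: "(\<forall>k<n. 0 \<le> \<alpha>2 k \<and> \<alpha>2 k \<le> \<beta>2 k \<and> \<beta>2 k \<le> b) \<and>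
        (\<forall>k<n. \<forall>j<n. k \<noteq> j \<longrightarrow> {\<alpha>2 k<..<\<beta>2 k} \<inter> {\<alpha>2 j<..<\<beta>2 j} = {}) \<and>
        (\<Sum>k<n. \<beta>2 k - \<alpha>2 k) < d2"
    proof (intro conjI allI impI)
      fix k assume k: "k < n"
      have "0 \<le> \<alpha> k" "\<alpha> k \<le> \<beta> k" "\<beta> k \<le> a + b" using H1[OF k] by auto
      then show "0 \<le> \<alpha>2 k" "\<alpha>2 k \<le> \<beta>2 k" "\<beta>2 k \<le> b" using a b unfolding \<alpha>2_def \<beta>2_def by (auto simp: max_def)
    next
      fix k j assume kj: "k < n" "j < n" "k \<noteq> j"
      show "{\<alpha>2 k<..<\<beta>2 k} \<inter> {\<alpha>2 j<..<\<beta>2 j} = {}"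
      proof (rule ccontr)
        assume "{\<alpha>2 k<..<\<beta>2 k} \<inter> {\<alpha>2 j<..<\<beta>2 j} \<noteq> {}"
        then obtain y where y: "y \<in> {\<alpha>2 k<..<\<beta>2 k}" "y \<in> {\<alpha>2 j<..<\<beta>2 j}" by blast
        have "y + a \<in> {\<alpha> k<..<\<beta> k} \<inter> {\<alpha> j<..<\<beta> j}" using sub2[OF y(1)] sub2[OF y(2)] by blast
        then show False using H2[OF kj] by blast
      qed
    next
      have "(\<Sum>k<n. \<beta>2 k - \<alpha>2 k) \<le> (\<Sum>k<n. \<beta> k - \<alpha> k)"
      proof (rule sum_mono)
        fix k assume "k \<in> {..<n}"
        then have "\<alpha> k \<le> \<beta> k" using H1 by auto
        then show "\<beta>2 k - \<alpha>2 k \<le> \<beta> k - \<alpha> k" unfolding \<alpha>2_def \<beta>2_def by (auto simp: max_def)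
      qed
      then show "(\<Sum>k<n. \<beta>2 k - \<alpha>2 k) < d2" using H3 by simp
    qed
    have xmin: "?x (min r a) = x1 (min r a)" for r by simp
    have xmax: "?x (max r a) = x2 (max r a - a)" for r using j by (auto simp: max_def)
    have "(\<Sum>k<n. norm (?x (\<beta> k) - ?x (\<alpha> k)))
        \<le> (\<Sum>k<n. norm (x1 (\<beta>1 k) - x1 (\<alpha>1 k)) + norm (x2 (\<beta>2 k) - x2 (\<alpha>2 k)))"
    proof (rule sum_mono)
      fix k assume "k \<in> {..<n}"
      then have "\<alpha> k \<le> \<beta> k" using H1 by auto
      from norm_split_min_max[OF this, of ?x a]
      show "norm (?x (\<beta> k) - ?x (\<alpha> k)) \<le> norm (x1 (\<beta>1 k) - x1 (\<alpha>1 k)) + norm (x2 (\<beta>2 k) - x2 (\<alpha>2 k))"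
        unfolding \<alpha>1_def \<beta>1_def \<alpha>2_def \<beta>2_def xmin xmax .
    qed
    also have "\<dots> = (\<Sum>k<n. norm (x1 (\<beta>1 k) - x1 (\<alpha>1 k))) + (\<Sum>k<n. norm (x2 (\<beta>2 k) - x2 (\<alpha>2 k)))"
      by (rule sum.distrib)
    also have "\<dots> < e/2 + e/2"
    proof (rule add_strict_mono)
      show "(\<Sum>k<n. norm (x1 (\<beta>1 k) - x1 (\<alpha>1 k))) < e/2" using D1 c1 by blast
      show "(\<Sum>k<n. norm (x2 (\<beta>2 k) - x2 (\<alpha>2 k))) < e/2" using D2 c2 by blast
    qed
    finally show "(\<Sum>k<n. norm (?x (\<beta> k) - ?x (\<alpha> k))) < e" by simp
  qed
qed


lemma vd_shift:
  fixes x :: "real \<Rightarrow> 'a::real_normed_vector"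
  assumes "(x has_vector_derivative V) (at (r + c))"
  shows "((\<lambda>y. x (y + c)) has_vector_derivative V) (at r)"
proof -
  have "((\<lambda>y. y + c) has_vector_derivative 1) (at r)"
    by (auto intro!: derivative_eq_intros)
  from vector_diff_chain_at[OF this assms] show ?thesis by (simp add: o_def)
qed

lemma concat_deriv:
  fixes xa xb :: "real \<Rightarrow> 'x::euclidean_space" and ua ub :: "real \<Rightarrow> 'u::euclidean_space"
  assumes D1: "AE r in lebesgue. r \<in> {0<..<a} \<longrightarrow> (xa has_vector_derivative f (xa r) (ua r)) (at r)"
    and D2: "AE r in lebesgue. r \<in> {0<..<b} \<longrightarrow> (xb has_vector_derivative f (xb r) (ub r)) (at r)"
  defines "u \<equiv> \<lambda>r. if r < a then ua r else ub (r - a)"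
    and "x \<equiv> \<lambda>r. if r \<le> a then xa r else xb (r - a)"
  shows "AE r in lebesgue. r \<in> {0<..<a+b} \<longrightarrow> (x has_vector_derivative f (x r) (u r)) (at r)"
proof -
  have D2s: "AE r in lebesgue. r + -a \<in> {0<..<b} \<longrightarrow> (xb has_vector_derivative f (xb (r + -a)) (ub (r + -a))) (at (r + -a))"
    using AE_lebesgue_shift[OF D2] .
  show ?thesis
    using D1 D2s AE_lebesgue_neq[of a]
  proof eventually_elim
    case (elim r)
    show ?case
    proof
      assume r: "r \<in> {0<..<a+b}"
      show "(x has_vector_derivative f (x r) (u r)) (at r)"
      proof (cases "r < a")
        case True
        then have d: "(xa has_vector_derivative f (xa r) (ua r)) (at r)" using elim r by auto
        have "(x has_vector_derivative f (xa r) (ua r)) (at r)"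
          by (rule has_vector_derivative_transform_within_open[OF d, of "{..<a}"]) (use True in \<open>auto simp: x_def\<close>)
        then show ?thesis using True by (simp add: x_def u_def)
      next
        case False
        then have ra: "a < r" using elim by auto
        then have d: "(xb has_vector_derivative f (xb (r + -a)) (ub (r + -a))) (at (r + -a))"
          using elim r by auto
        have d2: "((\<lambda>y. xb (y + -a)) has_vector_derivative f (xb (r + -a)) (ub (r + -a))) (at r)"
          by (rule vd_shift[OF d])
        have "(x has_vector_derivative f (xb (r + -a)) (ub (r + -a))) (at r)"
          by (rule has_vector_derivative_transform_within_open[OF d2, of "{a<..}"]) (use ra in \<open>auto simp: x_def\<close>)
        then show ?thesis using ra by (simp add: x_def u_def)
      qed
    qed
  qed
qed

lemma concat_meas:
  fixes u1 u2 :: "real \<Rightarrow> 'u::euclidean_space"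
  assumes m1: "u1 \<in> borel_measurable (lebesgue_on {0..a})" and m2: "u2 \<in> borel_measurable (lebesgue_on {0..b})"
  shows "(\<lambda>r. if r < a then u1 r else u2 (r - a)) \<in> borel_measurable (lebesgue_on {0..a+b})"
proof -
  let ?F1 = "\<lambda>r. if r \<in> {0..a} then u1 r else 0"
  let ?F2 = "\<lambda>r. if r \<in> {0..b} then u2 r else 0"
  have F1: "?F1 \<in> borel_measurable lebesgue" by (rule bm_on_iff[THEN iffD1, OF m1])
  have F2: "?F2 \<in> borel_measurable lebesgue" by (rule bm_on_iff[THEN iffD1, OF m2])
  have F2s: "(\<lambda>r. ?F2 (r + -a)) \<in> borel_measurable lebesgue" using F2 by (rule bm_shift)
  have pr: "{r \<in> space lebesgue. r < a} \<in> sets lebesgue" by simp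
  have H: "(\<lambda>r. if r < a then ?F1 r else ?F2 (r + -a)) \<in> borel_measurable lebesgue"
    by (rule measurable_If[OF F1 F2s pr])
  show ?thesis
    by (rule bm_on_from_global[OF H]) auto
qed

lemma concat_int:
  fixes xa xb :: "real \<Rightarrow> 'x::euclidean_space" and ua ub :: "real \<Rightarrow> 'u::euclidean_space"
    and lc :: "'x \<Rightarrow> 'u \<Rightarrow> real"
  assumes i1: "set_integrable lborel {0..a} (\<lambda>s. lc (xa s) (ua s))"
    and i2: "set_integrable lborel {0..b} (\<lambda>s. lc (xb s) (ub s))"
    and j: "xb 0 = xa a" and a: "0 \<le> a" and b: "0 \<le> b"
  defines "u \<equiv> \<lambda>r. if r < a then ua r else ub (r - a)"
    and "x \<equiv> \<lambda>r. if r \<le> a then xa r else xb (r - a)"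
  shows "set_integrable lborel {0..a+b} (\<lambda>s. lc (x s) (u s))"
    and "set_lebesgue_integral lborel {0..a+b} (\<lambda>s. lc (x s) (u s)) =
         set_lebesgue_integral lborel {0..a} (\<lambda>s. lc (xa s) (ua s)) +
         set_lebesgue_integral lborel {0..b} (\<lambda>s. lc (xb s) (ub s))"
proof -
  let ?G = "\<lambda>s. lc (x s) (u s)"
  let ?G1 = "\<lambda>s. lc (xa s) (ua s)"
  let ?G2 = "\<lambda>s. lc (xb s) (ub s)"
  have i1': "set_integrable lborel {0..<a} ?G1" by (rule set_integrable_subset[OF i1]) auto
  have eq1: "?G s = ?G1 s" if "s \<in> {0..<a}" for s using that by (simp add: x_def u_def)
  have "set_integrable lborel {0..<a} ?G \<longleftrightarrow> set_integrable lborel {0..<a} ?G1"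
    by (rule set_integrable_cong_on(1)) (rule eq1)
  then have ia: "set_integrable lborel {0..<a} ?G" using i1' by blast
  have i2s: "set_integrable lborel {a..a+b} (\<lambda>s. ?G2 (s + -a))"
    by (rule shift_int(1)[OF i2]) auto
  have eq2: "?G s = ?G2 (s + -a)" if "s \<in> {a..a+b}" for s
    using that j by (auto simp: x_def u_def)
  have "set_integrable lborel {a..a+b} ?G \<longleftrightarrow> set_integrable lborel {a..a+b} (\<lambda>s. ?G2 (s + -a))"
    by (rule set_integrable_cong_on(1)) (rule eq2)
  then have ib: "set_integrable lborel {a..a+b} ?G" using i2s by blast
  show "set_integrable lborel {0..a+b} ?G" by (rule split_int(1)[OF ia ib a b])
  have e0: "(LINT s:{0..a+b}|lborel. ?G s) = (LINT s:{0..<a}|lborel. ?G s) + (LINT s:{a..a+b}|lborel. ?G s)"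
    by (rule split_int(2)[OF ia ib a b])
  have e1: "(LINT s:{0..<a}|lborel. ?G s) = (LINT s:{0..<a}|lborel. ?G1 s)"
    by (rule set_integrable_cong_on(2)) (rule eq1)
  have e2: "(LINT s:{0..<a}|lborel. ?G1 s) = (LINT s:{0..a}|lborel. ?G1 s)" by (rule null_delta_Ico[OF i1])
  have e3: "(LINT s:{a..a+b}|lborel. ?G s) = (LINT s:{a..a+b}|lborel. ?G2 (s + -a))"
    by (rule set_integrable_cong_on(2)) (rule eq2)
  have e4: "(LINT s:{a..a+b}|lborel. ?G2 (s + -a)) = (LINT s:{0..b}|lborel. ?G2 s)" by (rule shift_int(2)[OF i2]) auto
  show "set_lebesgue_integral lborel {0..a+b} ?G =
         set_lebesgue_integral lborel {0..a} ?G1 + set_lebesgue_integral lborel {0..b} ?G2"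
    unfolding e0 e1 e2 e3 e4 ..
qed

lemma adm_concat:
  fixes X :: "'x::euclidean_space set" and U :: "'u::euclidean_space set"
  assumes A1: "admissible X U lc f a x0 u1 x1" and A2: "admissible X U lc f b (x1 a) u2 x2"
    and a: "0 \<le> a" and b: "0 \<le> b"
  defines "u \<equiv> \<lambda>r. if r < a then u1 r else u2 (r - a)"
    and "x \<equiv> \<lambda>r. if r \<le> a then x1 r else x2 (r - a)"
  shows "admissible X U lc f (a + b) x0 u x"
    and "set_lebesgue_integral lborel {0..a+b} (\<lambda>s. lc (x s) (u s)) =
         set_lebesgue_integral lborel {0..a} (\<lambda>s. lc (x1 s) (u1 s)) +
         set_lebesgue_integral lborel {0..b} (\<lambda>s. lc (x2 s) (u2 s))"
    and "x (a + b) = x2 b"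
proof -
  note A1' = A1[unfolded admissible_def] and A2' = A2[unfolded admissible_def]
  have j: "x2 0 = x1 a" using A2' by blast
  have m1: "u1 \<in> borel_measurable (lebesgue_on {0..a})" using A1' by blast
  have m2: "u2 \<in> borel_measurable (lebesgue_on {0..b})" using A2' by blast
  have mu: "u \<in> borel_measurable (lebesgue_on {0..a+b})" unfolding u_def by (rule concat_meas[OF m1 m2])
  have U1: "\<forall>s\<in>{0..a}. u1 s \<in> U" and U2: "\<forall>s\<in>{0..b}. u2 s \<in> U" using A1' A2' by blast+
  have X1: "\<forall>s\<in>{0..a}. x1 s \<in> X" and X2: "\<forall>s\<in>{0..b}. x2 s \<in> X" using A1' A2' by blast+
  have ac1: "abs_cont_on a x1" and ac2: "abs_cont_on b x2" using A1' A2' by blast+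
  have x10: "x1 0 = x0" using A1' by blast
  have uU: "\<forall>s\<in>{0..a+b}. u s \<in> U" using U1 U2 by (auto simp: u_def)
  have xX: "\<forall>s\<in>{0..a+b}. x s \<in> X" using X1 X2 by (auto simp: x_def)
  have ac: "abs_cont_on (a + b) x" unfolding x_def by (rule ac_concat[OF ac1 ac2 j a b])
  have x0: "x 0 = x0" using x10 a by (simp add: x_def)
  have D1: "AE r in lebesgue. r \<in> {0<..<a} \<longrightarrow> (x1 has_vector_derivative f (x1 r) (u1 r)) (at r)"
    by (rule D_iff[THEN iffD1]) (use A1' in blast)
  have D2: "AE r in lebesgue. r \<in> {0<..<b} \<longrightarrow> (x2 has_vector_derivative f (x2 r) (u2 r)) (at r)"
    by (rule D_iff[THEN iffD1]) (use A2' in blast)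
  have "AE r in lebesgue. r \<in> {0<..<a+b} \<longrightarrow> (x has_vector_derivative f (x r) (u r)) (at r)"
    unfolding x_def u_def by (rule concat_deriv[where a=a and b=b and f=f and xa=x1 and ua=u1 and xb=x2 and ub=u2, OF D1 D2])
  then have Dx: "AE s in lebesgue_on {0..a+b}. (x has_vector_derivative f (x s) (u s)) (at s within {0..a+b})"
    by (rule D_iff[THEN iffD2])
  have i1: "set_integrable lborel {0..a} (\<lambda>s. lc (x1 s) (u1 s))" using A1' by blast
  have i2: "set_integrable lborel {0..b} (\<lambda>s. lc (x2 s) (u2 s))" using A2' by blast
  have iG: "set_integrable lborel {0..a+b} (\<lambda>s. lc (x s) (u s))"
    unfolding x_def u_def by (rule concat_int(1)[where a=a and b=b and lc=lc and xa=x1 and ua=u1 and xb=x2 and ub=u2, OF i1 i2 j a b])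
  show "admissible X U lc f (a + b) x0 u x"
    unfolding admissible_def using mu uU ac xX x0 Dx iG by blast
  show "set_lebesgue_integral lborel {0..a+b} (\<lambda>s. lc (x s) (u s)) =
         set_lebesgue_integral lborel {0..a} (\<lambda>s. lc (x1 s) (u1 s)) +
         set_lebesgue_integral lborel {0..b} (\<lambda>s. lc (x2 s) (u2 s))"
    unfolding x_def u_def by (rule concat_int(2)[where a=a and b=b and lc=lc and xa=x1 and ua=u1 and xb=x2 and ub=u2, OF i1 i2 j a b])
  show "x (a + b) = x2 b" using j b by (auto simp: x_def)
qed

lemma adm_split:
  fixes X :: "'x::euclidean_space set" and U :: "'u::euclidean_space set"
  assumes A: "admissible X U lc f (a + b) x0 u x" and a: "0 \<le> a" and b: "0 \<le> b"
  shows "admissible X U lc f a x0 u x"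
    and "admissible X U lc f b (x a) (\<lambda>r. u (r + a)) (\<lambda>r. x (r + a))"
    and "set_lebesgue_integral lborel {0..a+b} (\<lambda>s. lc (x s) (u s)) =
         set_lebesgue_integral lborel {0..a} (\<lambda>s. lc (x s) (u s)) +
         set_lebesgue_integral lborel {0..b} (\<lambda>s. lc (x (s + a)) (u (s + a)))"
proof -
  note A' = A[unfolded admissible_def]
  let ?G = "\<lambda>s. lc (x s) (u s)"
  have iG: "set_integrable lborel {0..a+b} ?G" using A' by blast
  have ia: "set_integrable lborel {0..a} ?G" by (rule set_integrable_subset[OF iG]) (use b in auto)
  have ia': "set_integrable lborel {0..<a} ?G" by (rule set_integrable_subset[OF iG]) (use b in auto)
  have ib: "set_integrable lborel {a..a+b} ?G" by (rule set_integrable_subset[OF iG]) (use a in auto)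
  have D: "AE r in lebesgue. r \<in> {0<..<a+b} \<longrightarrow> (x has_vector_derivative f (x r) (u r)) (at r)"
    by (rule D_iff[THEN iffD1]) (use A' in blast)
  have m: "u \<in> borel_measurable (lebesgue_on {0..a+b})" using A' by blast
  show "admissible X U lc f a x0 u x"
    unfolding admissible_def
  proof (intro conjI)
    show "u \<in> borel_measurable (lebesgue_on {0..a})" by (rule bm_on_restrict[OF m]) (use b in auto)
    show "\<forall>s\<in>{0..a}. u s \<in> U" "\<forall>s\<in>{0..a}. x s \<in> X" "x 0 = x0" using A' b by auto
    show "abs_cont_on a x" by (rule ac_restrict[of "a+b"]) (use A' b in auto)
    have "AE r in lebesgue. r \<in> {0<..<a} \<longrightarrow> (x has_vector_derivative f (x r) (u r)) (at r)"
      using D by eventually_elim (use b in auto)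
    then show "AE s in lebesgue_on {0..a}. (x has_vector_derivative f (x s) (u s)) (at s within {0..a})"
      by (rule D_iff[THEN iffD2])
    show "set_integrable lborel {0..a} ?G" by (rule ia)
  qed
  show "admissible X U lc f b (x a) (\<lambda>r. u (r + a)) (\<lambda>r. x (r + a))"
    unfolding admissible_def
  proof (intro conjI)
    have "(\<lambda>r. u (r + a)) \<in> borel_measurable (lebesgue_on {0-a..(a+b)-a})" by (rule bm_on_shift[OF m])
    then show "(\<lambda>r. u (r + a)) \<in> borel_measurable (lebesgue_on {0..b})" by (rule bm_on_restrict) (use a in auto)
    show "\<forall>s\<in>{0..b}. u (s + a) \<in> U" "\<forall>s\<in>{0..b}. x (s + a) \<in> X" using A' a by auto
    show "x (0 + a) = x a" by simp
    show "abs_cont_on b (\<lambda>r. x (r + a))" by (rule ac_shift) (use A' a in auto)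
    have "AE r in lebesgue. r + a \<in> {0<..<a+b} \<longrightarrow> (x has_vector_derivative f (x (r + a)) (u (r + a))) (at (r + a))"
      by (rule AE_lebesgue_shift[OF D])
    then have "AE r in lebesgue. r \<in> {0<..<b} \<longrightarrow> ((\<lambda>y. x (y + a)) has_vector_derivative f (x (r + a)) (u (r + a))) (at r)"
    proof eventually_elim
      case (elim r)
      show ?case
      proof
        assume "r \<in> {0<..<b}"
        then have "r + a \<in> {0<..<a+b}" using a by auto
        then show "((\<lambda>y. x (y + a)) has_vector_derivative f (x (r + a)) (u (r + a))) (at r)"
          using elim by (intro vd_shift) auto
      qed
    qed
    then show "AE s in lebesgue_on {0..b}. ((\<lambda>r. x (r + a)) has_vector_derivative f (x (s + a)) (u (s + a))) (at s within {0..b})"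
      by (rule D_iff[THEN iffD2])
    show "set_integrable lborel {0..b} (\<lambda>s. lc (x (s + a)) (u (s + a)))"
      by (rule shift_int(1)[OF ib]) auto
  qed
  have "(LINT s:{0..a+b}|lborel. ?G s) = (LINT s:{0..<a}|lborel. ?G s) + (LINT s:{a..a+b}|lborel. ?G s)"
    by (rule split_int(2)[OF ia' ib a b])
  also have "(LINT s:{0..<a}|lborel. ?G s) = (LINT s:{0..a}|lborel. ?G s)" by (rule null_delta_Ico[OF ia])
  also have "(LINT s:{a..a+b}|lborel. ?G s) = (LINT s:{0..b}|lborel. ?G (s + a))"
    by (rule shift_int(2)[symmetric, OF ib]) auto
  finally show "set_lebesgue_integral lborel {0..a+b} ?G =
         set_lebesgue_integral lborel {0..a} ?G + set_lebesgue_integral lborel {0..b} (\<lambda>s. lc (x (s + a)) (u (s + a)))" .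
qed


lemma S_upper:
  assumes "admissible X U lc f t y u xx"
  shows "ereal (set_lebesgue_integral lborel {0..t} (\<lambda>s. lc (xx s) (u s))) \<oplus> h (xx t) \<le> S_op X U lc f t h y"
  unfolding S_op_def by (rule SUP_upper2[of "(u, xx)"]) (use assms in auto)

lemma S_least:
  assumes "\<And>u xx. admissible X U lc f t y u xx \<Longrightarrow>
     ereal (set_lebesgue_integral lborel {0..t} (\<lambda>s. lc (xx s) (u s))) \<oplus> h (xx t) \<le> c"
  shows "S_op X U lc f t h y \<le> c"
  unfolding S_op_def by (rule SUP_least) (use assms in auto)

lemma mpp_ereal_assoc: "ereal p \<oplus> (ereal q \<oplus> z) = ereal (p + q) \<oplus> z"
  by (simp add: mpp_assoc[symmetric])

lemma DPP:
  fixes X :: "'x::euclidean_space set" and U :: "'u::euclidean_space set"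
  assumes a: "0 \<le> a" and b: "0 \<le> b"
  shows "S_op X U lc f a (S_op X U lc f b g) x0 = S_op X U lc f (a + b) g x0"
proof (rule antisym)
  let ?R = "S_op X U lc f (a + b) g x0"
  show "S_op X U lc f a (S_op X U lc f b g) x0 \<le> ?R"
  proof (rule S_least)
    fix u1 x1 assume A1: "admissible X U lc f a x0 u1 x1"
    define I1 where "I1 = set_lebesgue_integral lborel {0..a} (\<lambda>s. lc (x1 s) (u1 s))"
    have "S_op X U lc f b g (x1 a) \<le> ?R \<oplus> ereal (- I1)"
    proof (rule S_least)
      fix u2 x2 assume A2: "admissible X U lc f b (x1 a) u2 x2"
      define I2 where "I2 = set_lebesgue_integral lborel {0..b} (\<lambda>s. lc (x2 s) (u2 s))"
      let ?u = "\<lambda>r. if r < a then u1 r else u2 (r - a)"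
      let ?x = "\<lambda>r. if r \<le> a then x1 r else x2 (r - a)"
      have c1: "admissible X U lc f (a + b) x0 ?u ?x" by (rule adm_concat(1)[OF A1 A2 a b])
      have c2: "set_lebesgue_integral lborel {0..a+b} (\<lambda>s. lc (?x s) (?u s)) = I1 + I2"
        unfolding I1_def I2_def by (rule adm_concat(2)[OF A1 A2 a b])
      have c3: "?x (a + b) = x2 b" by (rule adm_concat(3)[OF A1 A2 a b])
      have "ereal I1 \<oplus> (ereal I2 \<oplus> g (x2 b)) \<le> ?R"
        using S_upper[OF c1, of g] unfolding c2 c3 mpp_ereal_assoc .
      then have "(ereal I2 \<oplus> g (x2 b)) \<oplus> ereal (- (- I1)) \<le> ?R" by (simp add: mpp_comm)
      then show "ereal I2 \<oplus> g (x2 b) \<le> ?R \<oplus> ereal (- I1)"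
        by (simp only: mpp_shift)
    qed
    then have "S_op X U lc f b g (x1 a) \<oplus> ereal (- (- I1)) \<le> ?R"
      by (simp only: mpp_shift)
    then have "ereal I1 \<oplus> S_op X U lc f b g (x1 a) \<le> ?R"
      by (simp add: mpp_comm)
    then show "ereal (set_lebesgue_integral lborel {0..a} (\<lambda>s. lc (x1 s) (u1 s))) \<oplus> S_op X U lc f b g (x1 a) \<le> ?R"
      unfolding I1_def .
  qed
  show "?R \<le> S_op X U lc f a (S_op X U lc f b g) x0"
  proof (rule S_least)
    fix u x assume A: "admissible X U lc f (a + b) x0 u x"
    have s1: "admissible X U lc f a x0 u x" by (rule adm_split(1)[OF A a b])
    have s2: "admissible X U lc f b (x a) (\<lambda>r. u (r + a)) (\<lambda>r. x (r + a))" by (rule adm_split(2)[OF A a b])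
    have s3: "set_lebesgue_integral lborel {0..a+b} (\<lambda>s. lc (x s) (u s)) =
         set_lebesgue_integral lborel {0..a} (\<lambda>s. lc (x s) (u s)) +
         set_lebesgue_integral lborel {0..b} (\<lambda>s. lc (x (s + a)) (u (s + a)))" by (rule adm_split(3)[OF A a b])
    have xb: "x (a + b) = x (b + a)" by (simp add: add.commute)
    have "ereal (set_lebesgue_integral lborel {0..b} (\<lambda>s. lc (x (s + a)) (u (s + a)))) \<oplus> g (x (b + a))
          \<le> S_op X U lc f b g (x a)"
      using S_upper[OF s2, of g] by simp
    then have "ereal (set_lebesgue_integral lborel {0..a} (\<lambda>s. lc (x s) (u s))) \<oplus>
               (ereal (set_lebesgue_integral lborel {0..b} (\<lambda>s. lc (x (s + a)) (u (s + a)))) \<oplus> g (x (b + a)))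
          \<le> ereal (set_lebesgue_integral lborel {0..a} (\<lambda>s. lc (x s) (u s))) \<oplus> S_op X U lc f b g (x a)"
      by (rule mpp_mono[OF order.refl])
    also have "\<dots> \<le> S_op X U lc f a (S_op X U lc f b g) x0" by (rule S_upper[OF s1])
    finally show "ereal (set_lebesgue_integral lborel {0..a+b} (\<lambda>s. lc (x s) (u s))) \<oplus> g (x (a + b))
          \<le> S_op X U lc f a (S_op X U lc f b g) x0"
      unfolding s3 xb mpp_ereal_assoc .
  qed
qed

lemma int_zero:
  fixes G :: "real \<Rightarrow> real"
  assumes "set_integrable lborel {0..0} G"
  shows "(LINT s:{0..0}|lborel. G s) = 0"
  using null_delta_Ico[OF assms] by (simp add: set_lebesgue_integral_def)

lemma S_zero:
  fixes X :: "'x::euclidean_space set" and U :: "'u::euclidean_space set"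
  assumes "U \<noteq> {}" "x0 \<in> X"
  shows "S_op X U lc f 0 g x0 = g x0"
proof (rule antisym)
  show "S_op X U lc f 0 g x0 \<le> g x0"
  proof (rule S_least)
    fix u xx assume A: "admissible X U lc f 0 x0 u xx"
    then have "set_integrable lborel {0..0} (\<lambda>s. lc (xx s) (u s))" "xx 0 = x0"
      unfolding admissible_def by blast+
    then show "ereal (set_lebesgue_integral lborel {0..0} (\<lambda>s. lc (xx s) (u s))) \<oplus> g (xx 0) \<le> g x0"
      using int_zero by (simp add: zero_ereal_def[symmetric])
  qed
  obtain u0 where u0: "u0 \<in> U" using assms(1) by blast
  have adm: "admissible X U lc f 0 x0 (\<lambda>_. u0) (\<lambda>_. x0)"
    unfolding admissible_def
  proof (intro conjI)
    show "(\<lambda>_. u0) \<in> borel_measurable (lebesgue_on {0..0})" by simp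
    show "\<forall>s\<in>{0..0}. u0 \<in> U" "\<forall>s\<in>{0..0}. x0 \<in> X" "x0 = x0" using u0 assms by auto
    show "abs_cont_on 0 (\<lambda>_. x0)" unfolding abs_cont_on_def by auto
    have "AE s in lebesgue. s \<in> {0<..<(0::real)} \<longrightarrow> ((\<lambda>_. x0) has_vector_derivative f x0 u0) (at s)" by simp
    then show "AE s in lebesgue_on {0..0}. ((\<lambda>_. x0) has_vector_derivative f x0 u0) (at s within {0..0})"
      by (rule D_iff[THEN iffD2])
    show "set_integrable lborel {0..0} (\<lambda>s::real. lc x0 u0)"
      by (rule borel_integrable_atLeastAtMost') (rule continuous_on_const)
  qed
  have "set_integrable lborel {0..0} (\<lambda>s::real. lc x0 u0)"
    by (rule borel_integrable_atLeastAtMost') (rule continuous_on_const)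
  then have "ereal (set_lebesgue_integral lborel {0..0} (\<lambda>s::real. lc x0 u0)) \<oplus> g x0 = g x0"
    using int_zero by (simp add: zero_ereal_def[symmetric])
  then show "g x0 \<le> S_op X U lc f 0 g x0"
    using S_upper[OF adm, of g] by simp
qed

lemma S_empty:
  assumes "U = {}" "0 \<le> t"
  shows "S_op X U lc f t g x0 = -\<infinity>"
proof -
  have "S_op X U lc f t g x0 \<le> -\<infinity>"
  proof (rule S_least)
    fix u xx assume "admissible X U lc f t x0 u xx"
    then have "u 0 \<in> U" using assms(2) unfolding admissible_def by auto
    then show "ereal (set_lebesgue_integral lborel {0..t} (\<lambda>s. lc (xx s) (u s))) \<oplus> g (xx t) \<le> -\<infinity>"
      using assms(1) by simp
  qed
  then show ?thesis by simp
qed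


lemma sd_refl: "sup_dist X u u = 0"
proof -
  have "sup_dist X u u \<le> 0"
    by (rule sd_le) (auto simp: close_def)
  then show ?thesis using sd_nonneg[of X u u] by simp
qed

theorem corollary5p3:
  fixes X :: "(real ^ 'n) set" and U :: "(real ^ 'm) set"
    and lc :: "real ^ 'n \<Rightarrow> real ^ 'm \<Rightarrow> real"
    and f :: "real ^ 'n \<Rightarrow> real ^ 'm \<Rightarrow> real ^ 'n"
    and T :: real and \<phi> :: "real ^ 'n \<Rightarrow> ereal"
    and p q N :: nat
    and w z :: "nat \<Rightarrow> real ^ 'n \<Rightarrow> ereal"
    and \<delta> :: real
  assumes T_pos: "T > 0"
    and phi_fin: "\<forall>x\<in>X. \<phi> x \<noteq> \<infinity>"
    and w_fin: "\<forall>i<p. \<forall>x\<in>X. w i x \<noteq> \<infinity>"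
    and z_fin: "\<forall>j<q. \<forall>x\<in>X. z j x \<noteq> \<infinity>"
    and N_pos: "N \<ge> 1"
    and delta_def: "\<delta> = T / real N"
  shows "sup_dist X (W_op p w (mpfem_coeffs X U lc f \<phi> p w q z \<delta> N))
                     (S_op X U lc f T \<phi>)
         \<le> (1 + ereal (T / \<delta>)) *
            (SUP k\<in>{0..N}.
               sup_dist X (proj_Z X q z (S_op X U lc f (real k * \<delta>) \<phi>))
                          (S_op X U lc f (real k * \<delta>) \<phi>)
             + sup_dist X (proj_W X p w (S_op X U lc f (real k * \<delta>) \<phi>))
                          (S_op X U lc f (real k * \<delta>) \<phi>))"
proof -
  define S where "S = S_op X U lc f \<delta>"
  define V where "V k = S_op X U lc f (real k * \<delta>) \<phi>" for k
  define H where "H k = W_op p w (mpfem_coeffs X U lc f \<phi> p w q z \<delta> k)" for k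
  define P where "P g = proj_W X p w (proj_Z X q z g)" for g
  define \<epsilon> where "\<epsilon> k = sup_dist X (proj_Z X q z (V k)) (V k) + sup_dist X (proj_W X p w (V k)) (V k)" for k
  define E where "E = (SUP k\<in>{0..N}. \<epsilon> k)"
  have dpos: "\<delta> > 0" using T_pos N_pos by (simp add: delta_def)
  have TN: "T / \<delta> = real N" using T_pos N_pos by (simp add: delta_def)
  have TV: "S_op X U lc f T \<phi> = V N" unfolding V_def using N_pos by (simp add: delta_def)
  have eps_nn: "0 \<le> \<epsilon> k" for k unfolding \<epsilon>_def by (rule add_nonneg_nonneg[OF sd_nonneg sd_nonneg])
  have eps_le: "\<epsilon> k \<le> E" if "k \<le> N" for k unfolding E_def by (rule SUP_upper) (use that in auto)
  have E_nn: "0 \<le> E" using eps_nn[of 0] eps_le[of 0] by simp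
  have nS: "sup_dist X (S a) (S b) \<le> sup_dist X a b" for a b
    unfolding S_def by (rule nonexp_sd[OF S_op_nonexp]) (use dpos in simp)
  have nP: "sup_dist X (P a) (P b) \<le> sup_dist X a b" for a b
    unfolding P_def using nonexp_sd[OF projW_nonexp, of X p w "proj_Z X q z a" "proj_Z X q z b"]
      nonexp_sd[OF projZ_nonexp, of X q z a b] by simp
  have step: "H (Suc k) x = P (S (H k)) x" for k x
    unfolding H_def P_def S_def by (rule algo_step)
  have dpp: "S (V k) x = V (Suc k) x" for k x
  proof -
    have "S (V k) x = S_op X U lc f (\<delta> + real k * \<delta>) \<phi> x"
      unfolding S_def V_def by (rule DPP) (use dpos in auto)
    also have "\<delta> + real k * \<delta> = real (Suc k) * \<delta>" by (simp add: algebra_simps)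
    finally show ?thesis unfolding V_def .
  qed
  have Perr: "sup_dist X (P (V k)) (V k) \<le> \<epsilon> k" for k
  proof -
    have "sup_dist X (P (V k)) (V k) \<le> sup_dist X (P (V k)) (proj_W X p w (V k)) + sup_dist X (proj_W X p w (V k)) (V k)"
      by (rule sd_triangle)
    also have "sup_dist X (P (V k)) (proj_W X p w (V k)) \<le> sup_dist X (proj_Z X q z (V k)) (V k)"
      unfolding P_def by (rule nonexp_sd[OF projW_nonexp])
    finally show ?thesis unfolding \<epsilon>_def by (simp add: add_right_mono)
  qed
  have rec: "sup_dist X (H (Suc k)) (V (Suc k)) \<le> sup_dist X (S (H k)) (V (Suc k)) + \<epsilon> (Suc k)" for k
  proof -
    have "sup_dist X (H (Suc k)) (V (Suc k)) = sup_dist X (P (S (H k))) (V (Suc k))"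
      by (rule sd_cong) (simp_all add: step)
    also have "\<dots> \<le> sup_dist X (P (S (H k))) (P (V (Suc k))) + sup_dist X (P (V (Suc k))) (V (Suc k))"
      by (rule sd_triangle)
    also have "\<dots> \<le> sup_dist X (S (H k)) (V (Suc k)) + \<epsilon> (Suc k)"
      by (rule add_mono[OF nP Perr])
    finally show ?thesis .
  qed
  have rec2: "sup_dist X (S (H (Suc k))) (V (Suc (Suc k))) \<le> sup_dist X (H (Suc k)) (V (Suc k))" for k
  proof -
    have "sup_dist X (S (H (Suc k))) (V (Suc (Suc k))) = sup_dist X (S (H (Suc k))) (S (V (Suc k)))"
      by (rule sd_cong) (simp_all add: dpp)
    also have "\<dots> \<le> sup_dist X (H (Suc k)) (V (Suc k))" by (rule nS)
    finally show ?thesis .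
  qed
  have base: "sup_dist X (S (H 0)) (V (Suc 0)) \<le> \<epsilon> 0"
  proof (cases "U = {}")
    case True
    have "sup_dist X (S (H 0)) (V (Suc 0)) = sup_dist X (V (Suc 0)) (V (Suc 0))"
      by (rule sd_cong) (use True dpos in \<open>simp_all add: S_def V_def S_empty\<close>)
    then show ?thesis by (simp only: sd_refl eps_nn)
  next
    case False
    have V0: "V 0 x = \<phi> x" if "x \<in> X" for x unfolding V_def using S_zero[OF False that] by simp
    have H0: "H 0 = proj_W X p w \<phi>" unfolding H_def proj_W_def by simp
    have "sup_dist X (S (H 0)) (V (Suc 0)) = sup_dist X (S (H 0)) (S \<phi>)"
      unfolding S_def V_def by simp
    also have "\<dots> \<le> sup_dist X (H 0) \<phi>" by (rule nS)
    also have "\<dots> = sup_dist X (proj_W X p w (V 0)) (V 0)"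
    proof (rule sd_cong)
      have "W_res X w \<phi> = W_res X w (V 0)"
        unfolding W_res_def by (intro ext INF_cong) (simp_all add: V0)
      then show "H 0 x = proj_W X p w (V 0) x" for x unfolding H0 proj_W_def by simp
      show "\<phi> x = V 0 x" if "x \<in> X" for x using V0[OF that] by simp
    qed
    also have "\<dots> \<le> \<epsilon> 0" unfolding \<epsilon>_def using sd_nonneg
      by (metis add_increasing order.refl)
    finally show ?thesis .
  qed
  have main: "sup_dist X (H N) (V N) \<le> (1 + ereal (T / \<delta>)) * E"
  proof (cases E)
    case PInf
    have eq: "(1 + ereal (T / \<delta>)) * E = \<infinity>" using PInf TN by simp
    show ?thesis unfolding eq by simp
  next
    case MInf then show ?thesis using E_nn by simp
  next
    case (real e)
    have e_nn: "0 \<le> e" using E_nn real by simp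
    have D: "sup_dist X (S (H k)) (V (Suc k)) \<le> ereal (real (Suc k) * e)" if "Suc k \<le> N" for k
      using that
    proof (induction k)
      case 0
      have "sup_dist X (S (H 0)) (V (Suc 0)) \<le> E" using base eps_le[of 0] by simp
      then show ?case using real by simp
    next
      case (Suc k)
      have "sup_dist X (S (H (Suc k))) (V (Suc (Suc k))) \<le> sup_dist X (H (Suc k)) (V (Suc k))" by (rule rec2)
      also have "\<dots> \<le> sup_dist X (S (H k)) (V (Suc k)) + \<epsilon> (Suc k)" by (rule rec)
      also have "\<dots> \<le> ereal (real (Suc k) * e) + ereal e"
        using Suc eps_le[of "Suc k"] real by (intro add_mono) simp_all
      also have "\<dots> = ereal (real (Suc (Suc k)) * e)" by (simp add: algebra_simps)
      finally show ?case .
    qed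
    obtain m where m: "N = Suc m" using N_pos by (cases N) auto
    have "sup_dist X (H N) (V N) \<le> sup_dist X (S (H m)) (V (Suc m)) + \<epsilon> (Suc m)"
      unfolding m by (rule rec)
    also have "\<dots> \<le> ereal (real (Suc m) * e) + ereal e"
      using D[of m] eps_le[of "Suc m"] real m by (intro add_mono) simp_all
    also have "\<dots> = (1 + ereal (T / \<delta>)) * E"
      using real TN m by (simp add: algebra_simps)
    finally show "sup_dist X (H N) (V N) \<le> (1 + ereal (T / \<delta>)) * E" .
  qed
  then show ?thesis unfolding TV H_def[symmetric] E_def[symmetric] \<epsilon>_def[symmetric] V_def[symmetric] .
qed

end
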